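(* Let $K_1\subseteq K_2$ be fields, $n$ a positive integer, and $R=K_1+X^nK_2[[X]]$, i.e. the ring of formal power series $\sum_{i\ge0} a_iX^i$ with $a_0\in K_1$, $a_1=\dots=a_{n-1}=0$ and $a_i\in K_2$ for $i\ge n$. Then: (a) $R$ has absolutely irreducible elements if and only if $K_1=K_2$ and $n=1$; (b) $R$ has prime elements if and only if $K_1=K_2$ and $n=1$.
   Context: For an integral domain $R$, factorization notions refer to the monoid $(R\setminus\{0\},\cdot)$. An element is irreducible if it is a non-unit that is not a product of two non-units. Two factorizations into irreducibles $a_1\cdots a_n=b_1\cdots b_m$ of the same element are essentially the same if $n=m$ and, after re-indexing, $a_j$ and $b_j$ are associated for all $j$. An irreducible $r$ is absolutely irreducible if for every $n\in\mathbb N$, every factorization of $r^n$ into irreducibles is essentially the same as $r^n=r\cdots r$. *)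

theory Defs
  imports "HOL-Computational_Algebra.Formal_Power_Series"
begin

text \<open>K2 is the ambient field type 'a; K1 is a subfield given as a subset of 'a.\<close>

definition is_subfield :: "'a::field set \<Rightarrow> bool" where
  "is_subfield K \<longleftrightarrow> 0 \<in> K \<and> 1 \<in> K \<and>
     (\<forall>x\<in>K. \<forall>y\<in>K. x + y \<in> K \<and> x * y \<in> K) \<and>
     (\<forall>x\<in>K. - x \<in> K) \<and> (\<forall>x\<in>K. x \<noteq> 0 \<longrightarrow> inverse x \<in> K)"

definition R_ring :: "'a::field set \<Rightarrow> nat \<Rightarrow> 'a fps set" where
  "R_ring K1 n = {f. fps_nth f 0 \<in> K1 \<and> (\<forall>i. 0 < i \<and> i < n \<longrightarrow> fps_nth f i = 0)}"

definition unit_in :: "'b::comm_ring_1 set \<Rightarrow> 'b \<Rightarrow> bool" where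
  "unit_in S u \<longleftrightarrow> u \<in> S \<and> (\<exists>v\<in>S. u * v = 1)"

definition dvd_in :: "'b::comm_ring_1 set \<Rightarrow> 'b \<Rightarrow> 'b \<Rightarrow> bool" where
  "dvd_in S a b \<longleftrightarrow> (\<exists>c\<in>S. b = a * c)"

definition assoc_in :: "'b::comm_ring_1 set \<Rightarrow> 'b \<Rightarrow> 'b \<Rightarrow> bool" where
  "assoc_in S a b \<longleftrightarrow> (\<exists>u. unit_in S u \<and> b = u * a)"

definition irred_in :: "'b::comm_ring_1 set \<Rightarrow> 'b \<Rightarrow> bool" where
  "irred_in S r \<longleftrightarrow> r \<in> S \<and> r \<noteq> 0 \<and> \<not> unit_in S r \<and>
     (\<forall>a\<in>S. \<forall>b\<in>S. r = a * b \<longrightarrow> unit_in S a \<or> unit_in S b)"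

definition abs_irred_in :: "'b::comm_ring_1 set \<Rightarrow> 'b \<Rightarrow> bool" where
  "abs_irred_in S r \<longleftrightarrow> irred_in S r \<and>
     (\<forall>k::nat. \<forall>xs. (\<forall>x\<in>set xs. irred_in S x) \<and> prod_list xs = r ^ k \<longrightarrow>
        length xs = k \<and> (\<forall>x\<in>set xs. assoc_in S r x))"

definition prime_in :: "'b::comm_ring_1 set \<Rightarrow> 'b \<Rightarrow> bool" where
  "prime_in S p \<longleftrightarrow> p \<in> S \<and> p \<noteq> 0 \<and> \<not> unit_in S p \<and>
     (\<forall>a\<in>S. \<forall>b\<in>S. dvd_in S p (a * b) \<longrightarrow> dvd_in S p a \<or> dvd_in S p b)"

end

theory Submission
  imports Defs
begin

unbundle fps_syntax

lemma R_ideal: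
  assumes "p \<in> R_ring K1 n" "p $ 0 = 0" "0 \<in> K1"
  shows "p * h \<in> R_ring K1 n"
proof -
  have "(p*h) $ i = 0" if "0 < i" "i < n" for i
  proof -
    have "(p*h) $ i = (\<Sum>j=0..i. p$j * h$(i-j))" by (rule fps_mult_nth)
    also have "\<dots> = 0"
    proof (rule sum.neutral, intro ballI)
      fix j assume "j \<in> {0..i}"
      then have "p $ j = 0" using assms that unfolding R_ring_def
        by (cases "j = 0") auto
      then show "p$j * h$(i-j) = 0" by simp
    qed
    finally show ?thesis .
  qed
  then show ?thesis using assms unfolding R_ring_def by auto
qed

lemma R_unit:
  assumes K: "is_subfield K1" and f: "f \<in> R_ring K1 n" and f0: "f $ 0 \<noteq> 0"
  shows "unit_in (R_ring K1 n) f"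
proof -
  define v where "v = inverse f"
  have fv: "f * v = 1" unfolding v_def using f0 by (rule inverse_mult_eq_1')
  have v0: "v $ 0 \<in> K1"
  proof -
    have "f$0 * v$0 = 1" using fv by (metis fps_mult_nth_0 fps_one_nth)
    then have "v $ 0 = inverse (f$0)" using f0 by (simp add: field_simps)
    moreover have "f $ 0 \<in> K1" using f unfolding R_ring_def by auto
    ultimately show ?thesis using K f0 unfolding is_subfield_def by auto
  qed
  have vi: "v $ i = 0" if "0 < i" "i < n" for i
  proof -
    have "(f*v) $ i = (\<Sum>j=0..i. f$j * v$(i-j))" by (rule fps_mult_nth)
    also have "\<dots> = f$0 * v$i + (\<Sum>j=Suc 0..i. f$j * v$(i-j))"
      by (simp add: sum.atLeast_Suc_atMost)
    also have "(\<Sum>j=Suc 0..i. f$j * v$(i-j)) = 0"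
    proof (rule sum.neutral, intro ballI)
      fix j assume "j \<in> {Suc 0..i}"
      then have "f $ j = 0" using f that unfolding R_ring_def by auto
      then show "f$j * v$(i-j) = 0" by simp
    qed
    finally have "(f*v) $ i = f$0 * v$i" by simp
    moreover have "(f*v) $ i = 0" using fv that by simp
    ultimately show ?thesis using f0 by simp
  qed
  have "v \<in> R_ring K1 n" using v0 vi unfolding R_ring_def by auto
  then show ?thesis using f fv unfolding unit_in_def by auto
qed

lemma unit_nth0:
  assumes "unit_in S f" shows "f $ 0 \<noteq> 0"
proof
  assume "f $ 0 = 0"
  from assms obtain v where "f * v = 1" unfolding unit_in_def by auto
  then have "(f*v) $ 0 = 1" by simp
  with \<open>f $ 0 = 0\<close> show False by simp
qed

lemma nonunit_nth0:
  assumes K: "is_subfield K1" and "f \<in> R_ring K1 n" "\<not> unit_in (R_ring K1 n) f"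
  shows "f $ 0 = 0"
  using R_unit[OF K assms(2)] assms(3) by blast

lemma irred_times_unit:
  assumes K: "is_subfield K1" and r: "irred_in (R_ring K1 n) r"
    and h0: "h $ 0 \<noteq> 0"
  shows "irred_in (R_ring K1 n) (r * h)"
proof -
  let ?R = "R_ring K1 n"
  have rR: "r \<in> ?R" and rnz: "r \<noteq> 0" and rnu: "\<not> unit_in ?R r"
    using r unfolding irred_in_def by auto
  have z: "0 \<in> K1" using K unfolding is_subfield_def by auto
  have r0: "r $ 0 = 0" using nonunit_nth0[OF K rR rnu] .
  have inR: "r * h \<in> ?R" using R_ideal[OF rR r0 z] .
  have nz: "r * h \<noteq> 0" using rnz h0 by auto
  have nu: "\<not> unit_in ?R (r*h)"
  proof
    assume "unit_in ?R (r*h)"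
    from unit_nth0[OF this] r0 show False by simp
  qed
  have "unit_in ?R a \<or> unit_in ?R b" if "a \<in> ?R" "b \<in> ?R" "r * h = a * b" for a b
  proof (rule ccontr)
    assume "\<not> (unit_in ?R a \<or> unit_in ?R b)"
    then have a0: "a $ 0 = 0" and bnu: "\<not> unit_in ?R b"
      using nonunit_nth0[OF K] that by auto
    have hi: "h * inverse h = 1" using h0 by (rule inverse_mult_eq_1')
    have "r = r * h * inverse h" using hi by (simp add: mult.assoc)
    also have "\<dots> = (a * inverse h) * b" using that by (simp add: ac_simps)
    finally have req: "r = (a * inverse h) * b" .
    have aR: "a * inverse h \<in> ?R" using R_ideal[OF that(1) a0 z] .
    have "\<not> unit_in ?R (a * inverse h)" using unit_nth0[of ?R "a * inverse h"] a0 by (metis fps_mult_nth_0 mult_zero_left)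
    then show False using r req aR that(2) bnu unfolding irred_in_def by blast
  qed
  then show ?thesis using inR nz nu unfolding irred_in_def by blast
qed

lemma exists_bad:
  assumes K: "is_subfield K1" and "n > 0" and ne: "\<not> (K1 = UNIV \<and> n = 1)"
  shows "\<exists>g. g $ 0 \<noteq> 0 \<and> g \<notin> R_ring K1 n"
proof (cases "K1 = UNIV")
  case True
  then have "n \<ge> 2" using ne assms(2) by auto
  then have "(1 + fps_X :: 'a fps) \<notin> R_ring K1 n" unfolding R_ring_def
    by (auto intro!: exI[of _ 1])
  moreover have "(1 + fps_X :: 'a fps) $ 0 \<noteq> 0" by simp
  ultimately show ?thesis by blast
next
  case False
  then obtain c where c: "c \<notin> K1" by auto
  have "c \<noteq> 0" using c K unfolding is_subfield_def by auto
  then show ?thesis using c unfolding R_ring_def by (auto intro!: exI[of _ "fps_const c"])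
qed

lemma no_prime:
  assumes K: "is_subfield K1" and n: "n > 0" and ne: "\<not> (K1 = UNIV \<and> n = 1)"
  shows "\<not> prime_in (R_ring K1 n) p"
proof
  let ?R = "R_ring K1 n"
  assume p: "prime_in ?R p"
  obtain g where g: "g $ 0 \<noteq> 0" "g \<notin> ?R" using exists_bad[OF K n ne] by blast
  have pR: "p \<in> ?R" and pnz: "p \<noteq> 0" and pnu: "\<not> unit_in ?R p"
    using p unfolding prime_in_def by auto
  have z: "0 \<in> K1" using K unfolding is_subfield_def by auto
  have p0: "p $ 0 = 0" using nonunit_nth0[OF K pR pnu] .
  have aR: "p * g \<in> ?R" using R_ideal[OF pR p0 z] .
  have cR: "p * (g * g) \<in> ?R" using R_ideal[OF pR p0 z, of "g*g"] .
  have eq: "(p*g) * (p*g) = p * (p * (g * g))" by (simp add: ac_simps)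
  have "dvd_in ?R p ((p*g) * (p*g))" unfolding dvd_in_def
    using eq cR by blast
  then have "dvd_in ?R p (p*g)" using p aR unfolding prime_in_def by blast
  then obtain c where "c \<in> ?R" "p * g = p * c" unfolding dvd_in_def by blast
  then have "g \<in> ?R" using pnz by simp
  with g show False by simp
qed

lemma no_abs_irred:
  assumes K: "is_subfield K1" and n: "n > 0" and ne: "\<not> (K1 = UNIV \<and> n = 1)"
  shows "\<not> abs_irred_in (R_ring K1 n) r"
proof
  let ?R = "R_ring K1 n"
  assume r: "abs_irred_in ?R r"
  then have ri: "irred_in ?R r" unfolding abs_irred_in_def by auto
  obtain g where g: "g $ 0 \<noteq> 0" "g \<notin> ?R" using exists_bad[OF K n ne] by blast
  have g': "(inverse g) $ 0 \<noteq> 0" using g by simp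
  have i1: "irred_in ?R (r*g)" using irred_times_unit[OF K ri g(1)] .
  have i2: "irred_in ?R (r*inverse g)" using irred_times_unit[OF K ri g'] .
  have gi: "g * inverse g = 1" using g(1) by (rule inverse_mult_eq_1')
  have "prod_list [r*g, r*inverse g] = (r*r) * (g * inverse g)"
    by (simp add: ac_simps)
  then have pl: "prod_list [r*g, r*inverse g] = r ^ 2" using gi by (simp add: power2_eq_square)
  have all: "\<forall>xs. (\<forall>x\<in>set xs. irred_in ?R x) \<and> prod_list xs = r ^ 2 \<longrightarrow>
        length xs = 2 \<and> (\<forall>x\<in>set xs. assoc_in ?R r x)"
    using r unfolding abs_irred_in_def by blast
  have "(\<forall>x\<in>set [r*g, r*inverse g]. irred_in ?R x) \<and> prod_list [r*g, r*inverse g] = r ^ 2"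
    using i1 i2 pl by simp
  then have "\<forall>x\<in>set [r*g, r*inverse g]. assoc_in ?R r x" using all by blast
  then have "assoc_in ?R r (r*g)" by simp
  then obtain u where u: "unit_in ?R u" "r * g = u * r" unfolding assoc_in_def by blast
  have "r \<noteq> 0" using ri unfolding irred_in_def by auto
  then have "g = u" using u(2) by (simp add: mult.commute)
  then show False using u(1) g(2) unfolding unit_in_def by auto
qed



lemma univ_subfield: "is_subfield (UNIV :: 'a::field set)"
  unfolding is_subfield_def by auto

lemma R_univ: "R_ring (UNIV :: 'a::field set) 1 = UNIV"
  unfolding R_ring_def by auto

lemma R_univ': "R_ring (UNIV :: 'a::field set) (Suc 0) = UNIV"
  unfolding R_ring_def by auto

lemma unit_univ: "unit_in (UNIV :: 'a::field fps set) f \<longleftrightarrow> f $ 0 \<noteq> 0"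
proof
  assume "unit_in UNIV f" then show "f $ 0 \<noteq> 0" by (rule unit_nth0)
next
  assume f0: "f $ 0 \<noteq> 0"
  have "f \<in> R_ring UNIV (Suc 0)" by (simp only: R_univ') simp
  from R_unit[OF univ_subfield this f0] show "unit_in UNIV f" by (simp only: R_univ')
qed

lemma irred_univ:
  assumes "irred_in (UNIV :: 'a::field fps set) x"
  shows "subdegree x = 1"
proof -
  have parts: "x \<in> UNIV \<and> x \<noteq> 0 \<and> \<not> unit_in UNIV x \<and>
     (\<forall>a\<in>UNIV. \<forall>b\<in>UNIV. x = a * b \<longrightarrow> unit_in UNIV a \<or> unit_in UNIV b)"
    using assms unfolding irred_in_def by assumption
  have xnz: "x \<noteq> 0" using parts by (elim conjE)
  have xnu: "\<not> unit_in UNIV x" using parts by (elim conjE)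
  have x0: "x $ 0 = 0" using xnu unit_univ[of x] by blast
  have ge: "subdegree x \<ge> 1" using xnz x0 subdegree_eq_0_iff[of x] by auto
  show ?thesis
  proof (rule ccontr)
    assume "subdegree x \<noteq> 1"
    then have "subdegree x \<ge> 2" using ge by simp
    then have "x $ 1 = 0" by (intro nth_less_subdegree_zero) simp
    then have s0: "fps_shift 1 x $ 0 = 0" by simp
    have eq: "x = fps_shift 1 x * fps_X" using ge fps_shift_times_fps_X[of x] by simp
    have "\<forall>a\<in>UNIV. \<forall>b\<in>UNIV. x = a * b \<longrightarrow> unit_in UNIV a \<or> unit_in UNIV b"
      using parts by (elim conjE)
    from this[rule_format, OF UNIV_I UNIV_I eq]
    have "unit_in UNIV (fps_shift 1 x) \<or> unit_in UNIV (fps_X :: 'a fps)" .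
    then show False using s0 unit_nth0[of UNIV "fps_shift 1 x"] unit_nth0[of UNIV "fps_X::'a fps"]
      by auto
  qed
qed

lemma X_abs_irred: "abs_irred_in (UNIV :: 'a::field fps set) fps_X"
proof -
  let ?U = "UNIV :: 'a fps set"
  have irrX: "irred_in ?U fps_X"
  proof -
    have "unit_in ?U a \<or> unit_in ?U b" if "(fps_X::'a fps) = a * b" for a b
    proof (rule ccontr)
      assume "\<not> ?thesis"
      then have "a $ 0 = 0" "b $ 0 = 0" using unit_univ by auto
      then have "(a*b) $ 1 = 0" by (simp add: fps_mult_nth_1)
      then show False using that by simp
    qed
    then show ?thesis unfolding irred_in_def using unit_univ[of fps_X] by auto
  qed
  have sd: "subdegree (prod_list xs) = length xs \<and> prod_list xs \<noteq> 0"
    if "\<forall>x\<in>set xs. irred_in ?U x" for xs :: "'a fps list"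
    using that
  proof (induction xs)
    case Nil then show ?case by simp
  next
    case (Cons a xs)
    then have "irred_in ?U a" by auto
    then have "subdegree a = 1" "a \<noteq> 0" using irred_univ unfolding irred_in_def by auto
    with Cons show ?case by auto
  qed
  have as: "assoc_in ?U fps_X x" if "irred_in ?U x" for x :: "'a fps"
  proof -
    have s1: "subdegree x = 1" using irred_univ[OF that] .
    have xnz: "x \<noteq> 0" using that unfolding irred_in_def by auto
    have "x = fps_shift 1 x * fps_X" using s1 fps_shift_times_fps_X[of x] by simp
    moreover have "fps_shift 1 x $ 0 \<noteq> 0" using s1 xnz nth_subdegree_nonzero[of x] by simp
    ultimately show ?thesis unfolding assoc_in_def using unit_univ by blast
  qed
  have main: "length xs = k \<and> (\<forall>x\<in>set xs. assoc_in ?U fps_X x)"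
    if h: "(\<forall>x\<in>set xs. irred_in ?U x) \<and> prod_list xs = fps_X ^ k" for k and xs :: "'a fps list"
  proof -
    have "subdegree (prod_list xs) = length xs" using sd h by blast
    then show ?thesis using h as by simp
  qed
  show ?thesis unfolding abs_irred_in_def using irrX main by blast
qed

lemma X_prime: "prime_in (UNIV :: 'a::field fps set) fps_X"
proof -
  let ?U = "UNIV :: 'a fps set"
  have dv: "dvd_in ?U fps_X a" if "a $ 0 = 0" for a :: "'a fps"
  proof -
    have "subdegree a \<ge> 1 \<or> a = 0" using that subdegree_eq_0_iff[of a] by auto
    then have "a = fps_X * fps_shift 1 a" using fps_shift_times_fps_X[of a]
      by (auto simp: mult.commute)
    then show ?thesis unfolding dvd_in_def by blast
  qed
  have "dvd_in ?U fps_X a \<or> dvd_in ?U fps_X b" if "dvd_in ?U fps_X (a*b)" for a b :: "'a fps"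
  proof -
    from that obtain c where "a * b = fps_X * c" unfolding dvd_in_def by auto
    then have "(a*b) $ 0 = 0" by simp
    then have "a $ 0 = 0 \<or> b $ 0 = 0" by simp
    then show ?thesis using dv by blast
  qed
  then show ?thesis unfolding prime_in_def using unit_univ[of fps_X] by auto
qed

theorem mainTheorem2:
  fixes K1 :: "'a::field set" and n :: nat
  assumes "is_subfield K1" and "n > 0"
  shows "((\<exists>r. abs_irred_in (R_ring K1 n) r) \<longleftrightarrow> (K1 = UNIV \<and> n = 1)) \<and>
         ((\<exists>p. prime_in (R_ring K1 n) p) \<longleftrightarrow> (K1 = UNIV \<and> n = 1))"
proof (cases "K1 = UNIV \<and> n = 1")
  case True
  then have "R_ring K1 n = UNIV" by (simp add: R_univ')
  then show ?thesis using True X_abs_irred X_prime by auto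
next
  case False
  then show ?thesis using no_abs_irred[OF assms False] no_prime[OF assms False] by blast
qed

end
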